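(* Let $Q$ be a complete quiver with at least two frozen vertices, and let $j\neq k$ be mutable vertices such that $j$ is cycle-preserving for $Q$ and $k$ is cycle-preserving for $\mu_j(Q)$. If $j$ is neither red nor green in $Q$, then $j$ is red or green in $\mu_k(\mu_j(Q))$.
   Context: A quiver is a finite directed multigraph with no loops and no oriented 2-cycles, whose vertex set is partitioned into mutable and frozen vertices; arrows between two frozen vertices are ignored. $b_{ik}$ = number of arrows $i\to k$ minus number of arrows $k\to i$; $Q|_S$ is the induced subquiver on $S$. Mutation $\mu_j$ at mutable $j$: for each path $i\to j\to k$ add $b_{ij}b_{jk}$ arrows $i\to k$, reverse all arrows at $j$, cancel 2-cycles. Complete: at least one arrow between every pair of vertices at least one of which is mutable. A 3-vertex (sub)quiver is an oriented 3-cycle if it has at most one frozen vertex and its underlying directed graph is not acyclic. A mutable vertex $j$ is cycle-preserving for $Q$ if whenever $Q|_{\{i,j,k\}}$ is an oriented 3-cycle containing $j$, so is $\mu_j(Q)|_{\{i,j,k\}}$. A mutable vertex adjacent to at least one frozen vertex is red (resp. green) if all arrows between it and frozen vertices point towards (resp. away from) it. *)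

theory Defs
  imports Main
begin

text \<open>A quiver is given by a finite vertex set V, a set F \<subseteq> V of frozen vertices,
and the exchange matrix b, where b i k = #arrows i->k minus #arrows k->i.
(No loops and no oriented 2-cycles means the quiver is determined by b.)
Entries between two frozen vertices are ignored by all notions below.\<close>

definition quiver :: "'v set \<Rightarrow> 'v set \<Rightarrow> ('v \<Rightarrow> 'v \<Rightarrow> int) \<Rightarrow> bool" where
  "quiver V F b \<longleftrightarrow> finite V \<and> F \<subseteq> V \<and> (\<forall>i\<in>V. \<forall>k\<in>V. b i k = - b k i)"

text \<open>Mutation at j: for each path i->j->k add b_ij b_jk arrows i->k, reverse arrows
at j, cancel 2-cycles.\<close>
definition mut :: "'v \<Rightarrow> ('v \<Rightarrow> 'v \<Rightarrow> int) \<Rightarrow> ('v \<Rightarrow> 'v \<Rightarrow> int)" where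
  "mut j b = (\<lambda>i k. if i = j \<or> k = j then - b i k
      else b i k + max 0 (b i j) * max 0 (b j k) - max 0 (b k j) * max 0 (b j i))"

definition complete :: "'v set \<Rightarrow> 'v set \<Rightarrow> ('v \<Rightarrow> 'v \<Rightarrow> int) \<Rightarrow> bool" where
  "complete V F b \<longleftrightarrow>
     (\<forall>i\<in>V. \<forall>k\<in>V. i \<noteq> k \<and> (i \<notin> F \<or> k \<notin> F) \<longrightarrow> b i k \<noteq> 0)"

text \<open>The induced subquiver on S = {i,j,k} (distinct) is an oriented 3-cycle: at most one
frozen vertex and the underlying directed graph is not acyclic.\<close>
definition oriented_3cycle ::
  "'v set \<Rightarrow> ('v \<Rightarrow> 'v \<Rightarrow> int) \<Rightarrow> 'v \<Rightarrow> 'v \<Rightarrow> 'v \<Rightarrow> bool" where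
  "oriented_3cycle F b i j k \<longleftrightarrow>
     card ({i, j, k} \<inter> F) \<le> 1 \<and>
     \<not> acyclic {(x, y). x \<in> {i, j, k} \<and> y \<in> {i, j, k} \<and> \<not> (x \<in> F \<and> y \<in> F) \<and> 0 < b x y}"

definition cycle_preserving ::
  "'v set \<Rightarrow> 'v set \<Rightarrow> ('v \<Rightarrow> 'v \<Rightarrow> int) \<Rightarrow> 'v \<Rightarrow> bool" where
  "cycle_preserving V F b j \<longleftrightarrow> j \<in> V - F \<and>
     (\<forall>i\<in>V. \<forall>k\<in>V. i \<noteq> j \<and> k \<noteq> j \<and> i \<noteq> k \<longrightarrow>
        oriented_3cycle F b i j k \<longrightarrow> oriented_3cycle F (mut j b) i j k)"

definition red :: "'v set \<Rightarrow> 'v set \<Rightarrow> ('v \<Rightarrow> 'v \<Rightarrow> int) \<Rightarrow> 'v \<Rightarrow> bool" where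
  "red V F b j \<longleftrightarrow> j \<in> V - F \<and> (\<exists>f\<in>F. b j f \<noteq> 0) \<and> (\<forall>f\<in>F. b f j \<ge> 0)"

definition green :: "'v set \<Rightarrow> 'v set \<Rightarrow> ('v \<Rightarrow> 'v \<Rightarrow> int) \<Rightarrow> 'v \<Rightarrow> bool" where
  "green V F b j \<longleftrightarrow> j \<in> V - F \<and> (\<exists>f\<in>F. b j f \<noteq> 0) \<and> (\<forall>f\<in>F. b j f \<ge> 0)"

end

theory Submission
  imports Defs
begin

lemma acyc_rank:
  assumes "r \<subseteq> {(u, w). (g u :: nat) < g w}"
  shows "acyclic r"
proof -
  have "trans {(u, w). (g u :: nat) < g w}" by (auto simp: trans_def)
  hence "r\<^sup>+ \<subseteq> {(u, w). (g u :: nat) < g w}"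
  proof (intro subsetI)
    fix p assume "p \<in> r\<^sup>+"
    hence "p \<in> {(u, w). (g u :: nat) < g w}\<^sup>+" using assms by (rule trancl_mono)
    thus "p \<in> {(u, w). (g u :: nat) < g w}" using trancl_id[OF \<open>trans _\<close>] by simp
  qed
  thus ?thesis unfolding acyclic_def by auto
qed

lemma cyc_intro:
  assumes "{a, c, d} = {x, y, z}"
    and "\<not> (x \<in> F \<and> y \<in> F)" "\<not> (y \<in> F \<and> z \<in> F)" "\<not> (z \<in> F \<and> x \<in> F)"
    and "b x y > 0" "b y z > 0" "b z x > 0" "card ({a, c, d} \<inter> F) \<le> 1"
  shows "oriented_3cycle F b a c d"
proof -
  let ?R = "{(u, w). u \<in> {a, c, d} \<and> w \<in> {a, c, d} \<and> \<not> (u \<in> F \<and> w \<in> F) \<and> 0 < b u w}"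
  have "(x, y) \<in> ?R" "(y, z) \<in> ?R" "(z, x) \<in> ?R" using assms by auto
  hence "(x, x) \<in> ?R\<^sup>+" by (meson trancl.r_into_trancl trancl_into_trancl)
  hence "\<not> acyclic ?R" unfolding acyclic_def by blast
  thus ?thesis unfolding oriented_3cycle_def using assms(8) by blast
qed

lemma cyc_elim:
  assumes "oriented_3cycle F b a c d" "{a, c, d} = {x, y, z}"
    and anti: "\<forall>u\<in>{x, y, z}. \<forall>w\<in>{x, y, z}. b u w = - b w u"
    and "b x y > 0" "b y z > 0"
  shows "b z x > 0"
proof (rule ccontr)
  assume nz: "\<not> b z x > 0"
  have e: "b x x = - b x x" "b y y = - b y y" "b z z = - b z z" "b y x = - b x y" "b z y = - b y z"
    using anti by blast+
  have z: "b x x = 0" "b y y = 0" "b z z = 0" using e by linarith+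
  have n: "b y x < 0" "b z y < 0" using e assms(4,5) by linarith+
  have xy: "x \<noteq> y" using z assms(4) by auto
  have yz: "y \<noteq> z" using z assms(5) by auto
  have xz: "x \<noteq> z" using n assms(4) by auto
  define g where "g = (\<lambda>u. if u = x then 0 else if u = y then 1 else (2::nat))"
  let ?R = "{(u, w). u \<in> {a, c, d} \<and> w \<in> {a, c, d} \<and> \<not> (u \<in> F \<and> w \<in> F) \<and> 0 < b u w}"
  have "?R \<subseteq> {(u, w). g u < g w}"
  proof
    fix p assume "p \<in> ?R"
    then obtain u w where p: "p = (u, w)" "u \<in> {x,y,z}" "w \<in> {x,y,z}" "0 < b u w"
      using assms(2) by auto
    show "p \<in> {(u, w). g u < g w}" using p nz xy yz xz z n unfolding g_def by auto
  qed
  hence "acyclic ?R" by (rule acyc_rank)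
  thus False using assms(1) unfolding oriented_3cycle_def by blast
qed

lemma anti_sub:
  assumes "\<forall>i\<in>V. \<forall>k\<in>V. b i k = - b k i" "x \<in> V" "y \<in> V" "z \<in> V"
  shows "\<forall>u\<in>{x, y, z}. \<forall>w\<in>{x, y, z}. b u w = - b w u"
  using assms by blast

lemma mut_anti:
  assumes "\<forall>i\<in>V. \<forall>k\<in>V. b i k = - b k i" "j \<in> V"
  shows "\<forall>i\<in>V. \<forall>k\<in>V. mut j b i k = - mut j b k i"
proof (intro ballI)
  fix i k assume i: "i \<in> V" and k: "k \<in> V"
  have a1: "b i k = - b k i" "b i j = - b j i" "b k j = - b j k" using assms i k by blast+
  show "mut j b i k = - mut j b k i"
  proof (cases "i = j \<or> k = j")
    case True
    hence "mut j b i k = - b i k" "mut j b k i = - b k i" unfolding mut_def by auto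
    thus ?thesis using a1(1) by linarith
  next
    case False
    hence "mut j b i k = b i k + max 0 (b i j) * max 0 (b j k) - max 0 (b k j) * max 0 (b j i)"
      "mut j b k i = b k i + max 0 (b k j) * max 0 (b j i) - max 0 (b i j) * max 0 (b j k)"
      unfolding mut_def by auto
    thus ?thesis using a1 by linarith
  qed
qed


theorem mainTheorem7:
  fixes V F :: "'v set" and b :: "'v \<Rightarrow> 'v \<Rightarrow> int" and j k :: 'v
  assumes "quiver V F b"
    and "complete V F b"
    and "card F \<ge> 2"
    and "j \<in> V - F" and "k \<in> V - F" and "j \<noteq> k"
    and "cycle_preserving V F b j"
    and "cycle_preserving V F (mut j b) k"
    and "\<not> red V F b j" and "\<not> green V F b j"
  shows "red V F (mut k (mut j b)) j \<or> green V F (mut k (mut j b)) j"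
proof -
  define b' where "b' = mut j b"
  define b'' where "b'' = mut k b'"
  have anti: "\<forall>i\<in>V. \<forall>k\<in>V. b i k = - b k i" and FV: "F \<subseteq> V"
    using assms(1) unfolding quiver_def by blast+
  have jV: "j \<in> V" "j \<notin> F" and kV: "k \<in> V" "k \<notin> F" using assms(4,5) by auto
  have jk: "j \<noteq> k" by fact
  have anti1: "\<forall>i\<in>V. \<forall>l\<in>V. b' i l = - b' l i" unfolding b'_def by (rule mut_anti[OF anti jV(1)])
  have anti2: "\<forall>i\<in>V. \<forall>l\<in>V. b'' i l = - b'' l i" unfolding b''_def by (rule mut_anti[OF anti1 kV(1)])
  have cpj: "\<And>i l. i \<in> V \<Longrightarrow> l \<in> V \<Longrightarrow> i \<noteq> j \<Longrightarrow> l \<noteq> j \<Longrightarrow> i \<noteq> l \<Longrightarrow>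
      oriented_3cycle F b i j l \<Longrightarrow> oriented_3cycle F b' i j l"
    using assms(7) unfolding cycle_preserving_def b'_def by blast
  have cpk: "\<And>i l. i \<in> V \<Longrightarrow> l \<in> V \<Longrightarrow> i \<noteq> k \<Longrightarrow> l \<noteq> k \<Longrightarrow> i \<noteq> l \<Longrightarrow>
      oriented_3cycle F b' i k l \<Longrightarrow> oriented_3cycle F b'' i k l"
    using assms(8) unfolding cycle_preserving_def b'_def b''_def by blast
  have bjk0: "b j k \<noteq> 0" using assms(2) jV kV jk unfolding complete_def by blast
  have bjf0: "b j f \<noteq> 0" if f: "f \<in> F" for f
  proof -
    have "f \<in> V" "j \<noteq> f" using f FV jV by auto
    thus ?thesis using assms(2) jV unfolding complete_def by blast
  qed
  have bkf0: "b k f \<noteq> 0" if f: "f \<in> F" for f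
  proof -
    have "f \<in> V" "k \<noteq> f" using f FV kV by auto
    thus ?thesis using assms(2) kV unfolding complete_def by blast
  qed
  have card1: "\<And>f. f \<in> F \<Longrightarrow> card ({f, j, k} \<inter> F) \<le> 1"
  proof -
    fix f assume "f \<in> F"
    hence "{f, j, k} \<inter> F = {f}" using jV kV by auto
    thus "card ({f, j, k} \<inter> F) \<le> 1" by simp
  qed
  have card2: "\<And>f. f \<in> F \<Longrightarrow> card ({f, k, j} \<inter> F) \<le> 1"
    using card1 by (simp add: insert_commute)
  have Fne: "F \<noteq> {}" using assms(3) by auto
  have ex1: "\<exists>f\<in>F. b j f > 0"
  proof -
    obtain f0 where "f0 \<in> F" using Fne by auto
    hence "\<exists>f\<in>F. b j f \<noteq> 0" using bjf0 by auto
    hence "\<exists>f\<in>F. b f j < 0" using assms(9) jV assms(4) unfolding red_def by force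
    then obtain f where f: "f \<in> F" "b f j < 0" by blast
    have "b j f = - b f j" using anti FV jV f by blast
    thus ?thesis using f by force
  qed
  have ex2: "\<exists>f\<in>F. b j f < 0"
  proof -
    obtain f0 where "f0 \<in> F" using Fne by auto
    hence "\<exists>f\<in>F. b j f \<noteq> 0" using bjf0 by auto
    thus ?thesis using assms(10) assms(4) unfolding green_def by force
  qed
  have fac: "\<And>f. f \<in> F \<Longrightarrow> f \<in> V \<and> f \<noteq> j \<and> f \<noteq> k \<and> b f j = - b j f \<and> b f k = - b k f
      \<and> b' j f = - b j f \<and> b' f j = b j f \<and> b' j k = - b j k \<and> b' k j = b j k
      \<and> b' f k = b f k + max 0 (b f j) * max 0 (b j k) - max 0 (b k j) * max 0 (b j f)
      \<and> b' k f = b k f + max 0 (b k j) * max 0 (b j f) - max 0 (b f j) * max 0 (b j k)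
      \<and> b'' f j = b' f j + max 0 (b' f k) * max 0 (b' k j) - max 0 (b' j k) * max 0 (b' k f)
      \<and> b'' j f = b' j f + max 0 (b' j k) * max 0 (b' k f) - max 0 (b' f k) * max 0 (b' k j)
      \<and> b'' j k = b j k \<and> b'' k j = - b j k \<and> b'' k f = - b' k f \<and> b'' f k = - b' f k"
  proof -
    fix f assume f: "f \<in> F"
    have fV: "f \<in> V" "f \<noteq> j" "f \<noteq> k" using f FV jV kV by auto
    have a: "b f j = - b j f" "b f k = - b k f" "b k j = - b j k"
      using anti fV jV kV by blast+
    show "?thesis f" using fV jk a unfolding b''_def b'_def mut_def by auto
  qed
  show ?thesis
  proof (cases "b j k > 0")
    case pos: True
    have A: "b'' f j > 0" if f: "f \<in> F" and neg: "b j f < 0" for f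
    proof -
      note ff = fac[OF f]
      have fV: "f \<in> V" using ff by auto
      have bfj: "b f j > 0" using ff neg by linarith
      have p1: "b' f k > 0"
      proof (cases "b k f > 0")
        case True
        have "oriented_3cycle F b f j k"
          by (rule cyc_intro[where x=f and y=j and z=k]) (use bfj pos True jV kV card1[OF f] in auto)
        hence c: "oriented_3cycle F b' f j k" using cpj[OF fV kV(1)] ff jk by blast
        show ?thesis
          by (rule cyc_elim[OF c _ anti_sub[OF anti1 kV(1) jV(1) fV]]) (use ff pos neg in auto)
      next
        case False
        hence "b k f < 0" using bkf0[OF f] by linarith
        moreover have "b j f * b j k < 0" using neg pos by (simp add: mult_neg_pos)
        ultimately show ?thesis using ff pos bfj by (simp add: max_def)
      qed
      have "oriented_3cycle F b' f k j"
        by (rule cyc_intro[where x=k and y=j and z=f]) (use p1 pos neg ff jV kV card2[OF f] in auto)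
      hence c: "oriented_3cycle F b'' f k j" using cpk[OF fV jV(1)] ff jk by blast
      show ?thesis
        by (rule cyc_elim[OF c _ anti_sub[OF anti2 jV(1) kV(1) fV]]) (use ff pos p1 in auto)
    qed
    have B: "b'' f j \<ge> 0" if f: "f \<in> F" and nn: "b j f \<ge> 0" for f
    proof -
      note ff = fac[OF f]
      thus ?thesis using nn pos by (simp add: max_def)
    qed
    obtain f2 where f2: "f2 \<in> F" "b j f2 < 0" using ex2 by auto
    have "b'' j f2 = - b'' f2 j" using anti2 f2 FV jV by blast
    hence "b'' j f2 \<noteq> 0" using A[OF f2] by linarith
    moreover have "\<forall>f\<in>F. b'' f j \<ge> 0" using A B by force
    ultimately have "red V F b'' j" unfolding red_def using f2 assms(4) by blast
    thus ?thesis unfolding b''_def b'_def by blast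
  next
    case False
    hence neg: "b j k < 0" using bjk0 by linarith
    have A: "b'' j f > 0" if f: "f \<in> F" and ps: "b j f > 0" for f
    proof -
      note ff = fac[OF f]
      have fV: "f \<in> V" using ff by auto
      have "b k j = - b j k" using anti jV kV by blast
      hence bkj: "b k j > 0" using neg by linarith
      have p1: "b' k f > 0"
      proof (cases "b f k > 0")
        case True
        have "oriented_3cycle F b f j k"
          by (rule cyc_intro[where x=k and y=j and z=f]) (use bkj ps True jV kV card1[OF f] in auto)
        hence c: "oriented_3cycle F b' f j k" using cpj[OF fV kV(1)] ff jk by blast
        show ?thesis
          by (rule cyc_elim[OF c _ anti_sub[OF anti1 fV jV(1) kV(1)]]) (use ff ps neg in auto)
      next
        case False
        hence "b k f > 0" using bkf0[OF f] ff by linarith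
        moreover have "b k j * b j f > 0" using bkj ps by simp
        moreover have "b' k f = b k f + max 0 (b k j) * max 0 (b j f) - max 0 (b f j) * max 0 (b j k)"
          using ff by blast
        moreover have "max 0 (b k j) = b k j" "max 0 (b j f) = b j f" "max 0 (b j k) = 0"
          using bkj ps neg by auto
        ultimately show ?thesis by simp
      qed
      have "oriented_3cycle F b' f k j"
        by (rule cyc_intro[where x=j and y=k and z=f]) (use p1 ps neg ff jV kV card2[OF f] in auto)
      hence c: "oriented_3cycle F b'' f k j" using cpk[OF fV jV(1)] ff jk by blast
      have "b' f k = - b' k f" using anti1 fV kV by blast
      moreover have "b'' f k = - b' f k" using ff by blast
      ultimately have p2: "b'' f k > 0" using p1 by linarith
      show ?thesis
        by (rule cyc_elim[OF c _ anti_sub[OF anti2 fV kV(1) jV(1)]]) (use ff neg p2 in auto)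
    qed
    have B: "b'' j f \<ge> 0" if f: "f \<in> F" and nn: "b j f \<le> 0" for f
    proof -
      note ff = fac[OF f]
      have e1: "b'' j f = b' j f + max 0 (b' j k) * max 0 (b' k f) - max 0 (b' f k) * max 0 (b' k j)"
        "b' j f = - b j f" "b' j k = - b j k" "b' k j = b j k" using ff by blast+
      have m1: "max 0 (b' j k) = - b j k" using e1(3) neg by simp
      have m2: "max 0 (b' k j) = 0" using e1(4) neg by simp
      have e: "b'' j f = - b j f + (- b j k) * max 0 (b' k f)"
        using e1(1,2) m1 m2 by simp
      have "(- b j k) * max 0 (b' k f) \<ge> 0" using neg by (intro mult_nonneg_nonneg) auto
      thus ?thesis using e nn by linarith
    qed
    obtain f1 where f1: "f1 \<in> F" "b j f1 > 0" using ex1 by auto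
    have "b'' j f1 \<noteq> 0" using A[OF f1] by force
    moreover have "\<forall>f\<in>F. b'' j f \<ge> 0" using A B by force
    ultimately have "green V F b'' j" unfolding green_def using f1 assms(4) by blast
    thus ?thesis unfolding b''_def b'_def by blast
  qed
qed

end
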